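(* Let $p$ be an odd prime and let $N(p)$ be the number of residue classes $c\in\mathbb{Z}/(p)$ for which the polynomial $\Phi_{3,\tilde f}(x)$ attached to $\tilde f(x)=x^2+c$ over $\mathbb{Z}/(p)$ has a linear factor modulo $p$. Then $$N(p)\le \frac13\left(p+2\left(\frac{-3}{p}\right)\right),$$ where $\left(\frac{-3}{p}\right)$ is the Legendre symbol (equal to $0$ for $p=3$).
   Context: For $f(x)=x^2+c$, $\Phi_{3,f}(x)=\frac{f^3(x)-x}{f(x)-x}$, where $f^3$ is the threefold iterate; explicitly $\Phi_{3,f}(x)=x^6+x^5+(3c+1)x^4+(2c+1)x^3+(3c^2+3c+1)x^2+(c^2+2c+1)x+c^3+2c^2+c+1$, considered modulo $p$. *)

theory Defs
  imports "HOL-Computational_Algebra.Polynomial" "HOL-Number_Theory.Number_Theory"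
begin

text \<open>Phi_{3,f} for f(x) = x^2 + c, as an integer polynomial (explicit form from the paper).\<close>
definition Phi3 :: "int \<Rightarrow> int poly" where
  "Phi3 c = [: c^3 + 2*c^2 + c + 1, c^2 + 2*c + 1, 3*c^2 + 3*c + 1, 2*c + 1, 3*c + 1, 1, 1 :]"

text \<open>P has a linear factor modulo p: P == (a + b x) * q (mod p) coefficientwise,
  with b a unit mod p (i.e. the factor really has degree 1 over Z/(p)).\<close>
definition has_linear_factor_mod :: "int \<Rightarrow> int poly \<Rightarrow> bool" where
  "has_linear_factor_mod p P \<longleftrightarrow>
     (\<exists>a b :: int. \<exists>q :: int poly. \<not> p dvd b \<and>
        (\<forall>i. p dvd Polynomial.coeff (P - [:a, b:] * q) i))"

definition Ncount :: "int \<Rightarrow> nat" where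
  "Ncount p = card {c \<in> {0..p-1}. has_linear_factor_mod p (Phi3 c)}"

end

theory Submission imports Defs begin

definition PhiE :: "int \<Rightarrow> int \<Rightarrow> int" where
  "PhiE x c = x^6+x^5+(3*c+1)*x^4+(2*c+1)*x^3+(3*c^2+3*c+1)*x^2+(c^2+2*c+1)*x+c^3+2*c^2+c+1"

definition G :: "int \<Rightarrow> int \<Rightarrow> int" where
  "G c t = 4*t^2*(t+1)^2*c + (t^6+2*t^5+4*t^4+8*t^3+9*t^2+4*t+1)"

lemma poly_Phi3: "poly (Phi3 c) x = PhiE x c"
  unfolding Phi3_def PhiE_def by (simp add: algebra_simps power2_eq_square power3_eq_cube eval_nat_numeral)

lemma I1: "PhiE x c = 1 + (x+x^2+c) * (1 + 2*c + c^2 + x^2 + 2*x^2*c + x^4)"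
  unfolding PhiE_def by (simp add: algebra_simps eval_nat_numeral)
lemma I2: "PhiE x c = 1 + (x+x^2+c+1) * (c + c^2 + x + 2*x^2*c + x^4)"
  unfolding PhiE_def by (simp add: algebra_simps eval_nat_numeral)
lemma I3: "G c (x+x^2+c) = PhiE x c * (1 + 3*c + 4*c^2 + c^3 + 3*x + 10*x*c + 5*x*c^2 + 9*x^2 + 15*x^2*c + 3*x^2*c^2 + 13*x^3 + 10*x^3*c + 11*x^4 + 3*x^4*c + 5*x^5 + x^6)"
  unfolding PhiE_def G_def by (simp add: algebra_simps eval_nat_numeral)
lemma I4a: "(t+1)^6 * G c s = 4*(s*(t+1))^2*(s*(t+1)+t+1)^2*(t+1)^2*c + ((s*(t+1))^6+2*(s*(t+1))^5*(t+1)+4*(s*(t+1))^4*(t+1)^2+8*(s*(t+1))^3*(t+1)^3+9*(s*(t+1))^2*(t+1)^4+4*(s*(t+1))*(t+1)^5+(t+1)^6)"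
  unfolding G_def by (simp add: algebra_simps eval_nat_numeral)
lemma I4b: "4*(m-1)^2*(m-1+t+1)^2*(t+1)^2*c + ((m-1)^6+2*(m-1)^5*(t+1)+4*(m-1)^4*(t+1)^2+8*(m-1)^3*(t+1)^3+9*(m-1)^2*(t+1)^4+4*(m-1)*(t+1)^5+(t+1)^6) - G c t = m * (
  - 2 - 2*t + 8*t*c - 12*t^2 + 8*t^2*c - 8*t^3 - 8*t^3*c + 2*t^4 - 8*t^4*c + 4*t^5 + 4*m + 4*m*c - 8*m*t - 8*m*t*c + 6*m*t^2 - 24*m*t^2*c + 12*m*t^3 - 8*m*t^3*c + 9*m*t^4 + 4*m*t^4*c - 8*m^2 - 8*m^2*c + 12*m^2*t - 8*m^2*t*c + 8*m^2*t^2 + 8*m^2*t^2*c + 8*m^2*t^3 + 8*m^2*t^3*c + 9*m^3 + 4*m^3*c - 2*m^3*t + 8*m^3*t*c + 4*m^3*t^2 + 4*m^3*t^2*c - 4*m^4 + 2*m^4*t + m^5)"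
  unfolding G_def by (simp add: algebra_simps eval_nat_numeral)
lemma I5: "(t+1)^2*(s^2+s+1) - (t^2+t+1) = (s*(t+1)+1)*(s*(t+1)+(t::int))"
  by (simp add: power2_eq_square algebra_simps)

lemma I4: "\<exists>K. (t+1)^6 * G c s - G c t = (s*(t+1)+1) * K"
proof -
  have h: "s*(t+1)+1-1 = s*(t+1)" by simp
  show ?thesis using I4b[of "s*(t+1)+1" t c] unfolding h I4a[of t c s, symmetric]
    by blast
qed

lemma dvd_sub_cancel: "(p::int) dvd a - b \<Longrightarrow> p dvd a \<Longrightarrow> p dvd b"
proof -
  assume "p dvd a - b" "p dvd a"
  then have "p dvd a - (a - b)" by (rule dvd_diff[rotated])
  then show ?thesis by simp
qed

lemma dvd_sub_cancel2: "(p::int) dvd a - b \<Longrightarrow> p dvd b \<Longrightarrow> p dvd a"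
proof -
  assume "p dvd a - b" "p dvd b"
  then have "p dvd (a - b) + b" by (rule dvd_add)
  then show ?thesis by simp
qed

lemma coeff_dvd_poly:
  fixes Q :: "int poly"
  assumes "\<forall>i. p dvd Polynomial.coeff Q i"
  shows "p dvd poly Q x"
  unfolding poly_altdef using assms by (intro dvd_sum) simp

lemma inv_ex:
  fixes p a :: int
  assumes "prime p" "\<not> p dvd a"
  shows "\<exists>v. p dvd a*v - 1"
proof -
  have "coprime a p" using assms
    by (metis coprime_commute prime_imp_coprime)
  then obtain v where "[a*v = 1] (mod p)" using cong_solve_coprime_int by blast
  then show ?thesis by (auto simp: cong_iff_dvd_diff)
qed

lemma root_ex:
  assumes "prime p" "has_linear_factor_mod p (Phi3 c)"
  shows "\<exists>x. p dvd PhiE x c"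
proof -
  obtain a b q where nb: "\<not> p dvd b" and co: "\<forall>i. p dvd Polynomial.coeff (Phi3 c - [:a, b:] * q) i"
    using assms(2) unfolding has_linear_factor_mod_def by blast
  obtain v where v: "p dvd b*v - 1" using inv_ex[OF assms(1) nb] by blast
  define x where "x = -a*v"
  have "p dvd poly (Phi3 c - [:a, b:] * q) x" using coeff_dvd_poly[OF co] .
  moreover have "poly (Phi3 c - [:a, b:] * q) x = PhiE x c - (a + b*x) * poly q x"
    by (simp add: poly_Phi3 algebra_simps)
  ultimately have d1: "p dvd PhiE x c - (a + b*x) * poly q x" by simp
  have "a + b*x = - a*(b*v - 1)" unfolding x_def by (simp add: algebra_simps)
  then have "p dvd (a + b*x) * poly q x" using v by simp
  then have "p dvd PhiE x c" by (rule dvd_sub_cancel2[OF d1])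
  then show ?thesis by blast
qed

definition A :: "int \<Rightarrow> int \<Rightarrow> int set" where
  "A p c = {t \<in> {1..p-2}. p dvd G c t}"

definition R :: "int \<Rightarrow> int set" where
  "R p = {t \<in> {1..p-2}. p dvd t^2+t+1}"

lemma G_cong: "[a = b] (mod p) \<Longrightarrow> [G c a = G c b] (mod p)"
  unfolding G_def by (intro cong_add cong_mult cong_pow cong_refl)

lemma F1:
  assumes p: "prime p" and r: "p dvd PhiE x c"
  shows "A p c \<noteq> {}"
proof -
  define T where "T = x+x^2+c"
  define t where "t = T mod p"
  have pp: "p > 1" using p prime_gt_1_int by blast
  have t0: "0 \<le> t" "t < p" unfolding t_def using pp by auto
  have tc: "[t = T] (mod p)" unfolding t_def by (simp add: cong_def)
  have n1: "t \<noteq> 0"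
  proof
    assume "t = 0"
    then have "p dvd T" unfolding t_def by auto
    then have "p dvd PhiE x c - 1" unfolding I1[of x c] T_def by simp
    then have "p dvd 1" using r by (rule dvd_sub_cancel)
    with pp show False by auto
  qed
  have n2: "t \<noteq> p-1"
  proof
    assume "t = p-1"
    then have "[T = p-1] (mod p)" using tc by (simp add: cong_sym)
    then have "[T + 1 = p-1+1] (mod p)" by (intro cong_add cong_refl)
    then have "p dvd (T+1) - p" by (simp add: cong_iff_dvd_diff)
    then have "p dvd T + 1" using dvd_refl by (rule dvd_sub_cancel2)
    then have "p dvd PhiE x c - 1" unfolding I2[of x c] T_def by (simp add: add.assoc)
    then have "p dvd 1" using r by (rule dvd_sub_cancel)
    with pp show False by auto
  qed
  have "p dvd G c T" unfolding T_def I3 using r by simp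
  then have "p dvd G c t" using G_cong[OF tc, of c] by (simp add: cong_0_iff[symmetric] cong_def)
  then have "t \<in> A p c" unfolding A_def using t0 n1 n2 by auto
  then show ?thesis by blast
qed

lemma not_dvd_range:
  fixes p t :: int
  assumes "1 \<le> t" "t < p"
  shows "\<not> p dvd t"
  using assms zdvd_imp_le by fastforce

lemma eq_of_dvd:
  fixes p a b :: int
  assumes "p dvd a - b" "0 \<le> a" "a < p" "0 \<le> b" "b < p"
  shows "a = b"
proof -
  have "a mod p = b mod p" using assms(1) by (simp add: mod_eq_dvd_iff)
  then show ?thesis using assms by simp
qed

lemma sig:
  assumes p: "prime p" and t: "t \<in> A p c"
  shows "\<exists>s \<in> A p c. p dvd s*(t+1)+1"
proof -
  have pp: "p > 1" using p prime_gt_1_int by blast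
  have t1: "1 \<le> t" "t \<le> p-2" and Gt: "p dvd G c t" using t unfolding A_def by auto
  have nt1: "\<not> p dvd t+1" using not_dvd_range[of "t+1" p] t1 by simp
  have nt: "\<not> p dvd t" using not_dvd_range[of t p] t1 by simp
  obtain v where v: "p dvd (t+1)*v - 1" using inv_ex[OF p nt1] by blast
  define s where "s = (-v) mod p"
  have s0: "0 \<le> s" "s < p" unfolding s_def using pp by auto
  have "s mod p = (-v) mod p" unfolding s_def by simp
  then have sv: "p dvd s + v" using mod_eq_dvd_iff[of s p "-v"] by simp
  have e: "s*(t+1)+1 = (s+v)*(t+1) - ((t+1)*v - 1)" by (simp add: algebra_simps)
  have sd: "p dvd s*(t+1)+1" unfolding e using sv v by (simp add: dvd_diff)
  have sn0: "s \<noteq> 0"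
  proof
    assume "s = 0" then have "p dvd 1" using sd by simp
    then show False using pp by auto
  qed
  have sn1: "s \<noteq> p-1"
  proof
    assume "s = p-1"
    then have "s*(t+1)+1 = (p-1)*(t+1)+1" by simp
    also have "\<dots> = p*(t+1) - t" by (simp add: algebra_simps)
    finally have "s*(t+1)+1 = p*(t+1) - t" .
    then have "p dvd p*(t+1) - t" using sd by simp
    then have "p dvd t" using dvd_triv_left[of p "t+1"] by (rule dvd_sub_cancel)
    then show False using nt by simp
  qed
  obtain K where K: "(t+1)^6 * G c s - G c t = (s*(t+1)+1) * K" using I4 by blast
  have "p dvd (t+1)^6 * G c s - G c t" unfolding K using sd by simp
  then have "p dvd (t+1)^6 * G c s" using Gt by (rule dvd_sub_cancel2)
  then have "p dvd G c s" using p nt1 by (simp add: prime_dvd_mult_iff prime_dvd_power_iff)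
  then have "s \<in> A p c" unfolding A_def using s0 sn0 sn1 by auto
  then show ?thesis using sd by blast
qed

lemma finA: "finite (A p c)" unfolding A_def by (rule finite_subset[of _ "{1..p-2}"]) auto

lemma orbit3:
  assumes p: "prime p" and t: "t \<in> A p c" and nr: "\<not> p dvd t^2+t+1"
  shows "3 \<le> card (A p c)"
proof -
  obtain s where s: "s \<in> A p c" "p dvd s*(t+1)+1" using sig[OF p t] by blast
  obtain u where u: "u \<in> A p c" "p dvd u*(s+1)+1" using sig[OF p s(1)] by blast
  have r: "0 \<le> x \<and> x < p" if "x \<in> A p c" for x using that unfolding A_def by auto
  have st: "s \<noteq> t"
  proof
    assume "s = t"
    then have "p dvd t^2+t+1" using s(2) by (simp add: power2_eq_square algebra_simps)
    then show False using nr by simp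
  qed
  have ut: "u \<noteq> t"
  proof
    assume "u = t"
    then have "p dvd t*(s+1)+1" using u(2) by simp
    then have "p dvd (t*(s+1)+1) - (s*(t+1)+1)" using s(2) by (rule dvd_diff)
    then have "p dvd t - s" by (simp add: algebra_simps)
    then have "t = s" using eq_of_dvd r[OF t] r[OF s(1)] by blast
    then show False using st by simp
  qed
  have us: "u \<noteq> s"
  proof
    assume "u = s"
    then have h: "p dvd s^2+s+1" using u(2) by (simp add: power2_eq_square algebra_simps)
    have "p dvd (t+1)^2*(s^2+s+1) - (t^2+t+1)" unfolding I5 using s(2) by simp
    moreover have "p dvd (t+1)^2*(s^2+s+1)" using h by simp
    ultimately have "p dvd t^2+t+1" by (rule dvd_sub_cancel)
    then show False using nr by simp
  qed
  have c3: "card {t,s,u} = 3" using st ut us by auto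
  have sub: "{t,s,u} \<subseteq> A p c" using t s u by auto
  show ?thesis using card_mono[OF finA sub] c3 by simp
qed

lemma disj:
  assumes p: "prime p" "odd p" and c: "c \<in> {0..p-1}" "c' \<in> {0..p-1}"
    and t: "t \<in> A p c" "t \<in> A p c'"
  shows "c = c'"
proof -
  have pp: "p > 1" using p prime_gt_1_int by blast
  have t1: "1 \<le> t" "t \<le> p-2" using t unfolding A_def by auto
  have nt1: "\<not> p dvd t+1" using not_dvd_range[of "t+1" p] t1 by simp
  have nt: "\<not> p dvd t" using not_dvd_range[of t p] t1 by simp
  have n4: "\<not> p dvd 4"
  proof
    assume "p dvd 4"
    then have "p dvd 2 * 2" by simp
    then have "p dvd 2" using prime_dvd_mult_iff[OF p(1), of 2 2] by blast
    then have "p \<le> 2" using zdvd_imp_le by simp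
    then have "p = 2" using pp by simp
    then show False using p by simp
  qed
  have "G c t - G c' t = 4*t^2*(t+1)^2*(c-c')" unfolding G_def by (simp add: algebra_simps)
  moreover have "p dvd G c t - G c' t" using t unfolding A_def by (auto intro: dvd_diff)
  ultimately have "p dvd 4*t^2*(t+1)^2*(c-c')" by simp
  then have "p dvd c - c'" using p(1) n4 nt nt1 by (simp add: prime_dvd_mult_iff prime_dvd_power_iff)
  then show ?thesis using eq_of_dvd c by auto
qed

lemma finR: "finite (R p)" unfolding R_def by (rule finite_subset[of _ "{1..p-2}"]) auto

lemma Rbound:
  assumes p: "prime p" "odd p"
  shows "int (card (R p)) \<le> 1 + Legendre (-3) p"
proof -
  have pp: "p > 1" using p prime_gt_1_int by blast
  have qr: "QuadRes p (-3)" if "t \<in> R p" for t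
  proof -
    have h: "p dvd t^2+t+1" using that unfolding R_def by auto
    have eq: "(2*t+1)^2 - (-3) = 4*(t^2+t+1)" by (simp add: power2_eq_square algebra_simps)
    have "p dvd (2*t+1)^2 - (-3)" unfolding eq using h by (rule dvd_mult)
    then show ?thesis unfolding QuadRes_def by (auto simp: cong_iff_dvd_diff)
  qed
  show ?thesis
  proof (cases "[-3 = 0] (mod p)")
    case True
    then have "p dvd 3" by (simp add: cong_0_iff)
    then have "p \<le> 3" using zdvd_imp_le by simp
    then have "p = 3" using pp p(2) by presburger
    then have "R p \<subseteq> {1}" unfolding R_def by auto
    then have "card (R p) \<le> 1" using card_mono[of "{1}" "R p"] by simp
    then show ?thesis using True unfolding Legendre_def by simp
  next
    case nz: False
    show ?thesis
    proof (cases "QuadRes p (-3)")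
      case False
      then have "R p = {}" using qr by blast
      then show ?thesis using nz False unfolding Legendre_def by simp
    next
      case True
      have "card (R p) \<le> 2"
      proof (cases "R p = {}")
        case True then show ?thesis by simp
      next
        case False
        then obtain t1 where t1: "t1 \<in> R p" by blast
        have "R p \<subseteq> {t1, (-1-t1) mod p}"
        proof
          fix t assume t: "t \<in> R p"
          have "p dvd (t^2+t+1) - (t1^2+t1+1)" using t t1 unfolding R_def by (intro dvd_diff) auto
          moreover have "(t^2+t+1) - (t1^2+t1+1) = (t - t1)*(t + t1 + 1)"
            by (simp add: power2_eq_square algebra_simps)
          ultimately have "p dvd t - t1 \<or> p dvd t + t1 + 1" using p(1) by (simp add: prime_dvd_mult_iff)
          then show "t \<in> {t1, (-1-t1) mod p}"
          proof
            assume "p dvd t - t1"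
            then have "t = t1" using eq_of_dvd t t1 unfolding R_def by auto
            then show ?thesis by simp
          next
            assume "p dvd t + t1 + 1"
            then have "t mod p = (-1-t1) mod p" using mod_eq_dvd_iff[of t p "-1-t1"]
              by (simp add: diff_minus_eq_add algebra_simps)
            then have "t = (-1-t1) mod p" using t unfolding R_def by auto
            then show ?thesis by simp
          qed
        qed
        then have "card (R p) \<le> card {t1, (-1-t1) mod p}" by (simp add: card_mono)
        also have "\<dots> \<le> 2" by (simp add: card_insert_le_m1)
        finally show ?thesis .
      qed
      then show ?thesis using nz True unfolding Legendre_def by simp
    qed
  qed
qed

theorem theorem15:
  fixes p :: int
  assumes "prime p" and "odd p"
  shows "3 * int (Ncount p) \<le> p + 2 * Legendre (-3) p"
proof -
  define S where "S = {c \<in> {0..p-1}. has_linear_factor_mod p (Phi3 c)}"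
  have pp: "p > 1" using assms prime_gt_1_int by blast
  have finS: "finite S" unfolding S_def by (rule finite_subset[of _ "{0..p-1}"]) auto
  have key: "3 \<le> card (A p c) + 2 * card (A p c \<inter> R p)" if c: "c \<in> S" for c
  proof -
    obtain x where "p dvd PhiE x c" using root_ex[OF assms(1)] c unfolding S_def by blast
    then have ne: "A p c \<noteq> {}" using F1[OF assms(1)] by blast
    show ?thesis
    proof (cases "A p c \<inter> R p = {}")
      case True
      obtain t where t: "t \<in> A p c" using ne by blast
      then have "\<not> p dvd t^2+t+1" using True unfolding R_def A_def by auto
      then show ?thesis using orbit3[OF assms(1) t] by simp
    next
      case False
      then have "card (A p c \<inter> R p) \<ge> 1" using finR
        by (simp add: Suc_le_eq card_gt_0_iff)
      moreover have "card (A p c) \<ge> 1" using ne finA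
        by (simp add: Suc_le_eq card_gt_0_iff)
      ultimately show ?thesis by simp
    qed
  qed
  have dj: "\<forall>i\<in>S. \<forall>j\<in>S. i \<noteq> j \<longrightarrow> A p i \<inter> A p j = {}"
    using disj[OF assms] unfolding S_def by blast
  have dj2: "\<forall>i\<in>S. \<forall>j\<in>S. i \<noteq> j \<longrightarrow> (A p i \<inter> R p) \<inter> (A p j \<inter> R p) = {}"
    using dj by blast
  have s1: "(\<Sum>c\<in>S. card (A p c)) = card (\<Union>c\<in>S. A p c)"
    using card_UN_disjoint[OF finS _ dj] finA by simp
  have s2: "(\<Sum>c\<in>S. card (A p c \<inter> R p)) = card (\<Union>c\<in>S. A p c \<inter> R p)"
    using card_UN_disjoint[OF finS _ dj2] finR by simp
  have "(\<Union>c\<in>S. A p c) \<subseteq> {1..p-2}" unfolding A_def by auto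
  then have b1: "card (\<Union>c\<in>S. A p c) \<le> nat (p-2)"
    using card_mono[of "{1..p-2}"] by fastforce
  have "(\<Union>c\<in>S. A p c \<inter> R p) \<subseteq> R p" by auto
  then have b2: "card (\<Union>c\<in>S. A p c \<inter> R p) \<le> card (R p)"
    using card_mono[OF finR] by blast
  have "3 * card S = (\<Sum>c\<in>S. 3)" by simp
  also have "\<dots> \<le> (\<Sum>c\<in>S. card (A p c) + 2 * card (A p c \<inter> R p))"
    using key by (intro sum_mono) auto
  also have "\<dots> = (\<Sum>c\<in>S. card (A p c)) + 2 * (\<Sum>c\<in>S. card (A p c \<inter> R p))"
    by (simp add: sum.distrib sum_distrib_left)
  also have "\<dots> \<le> nat (p-2) + 2 * card (R p)" using s1 s2 b1 b2 by simp
  finally have "3 * card S \<le> nat (p-2) + 2 * card (R p)" .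
  then have "3 * int (card S) \<le> (p-2) + 2 * int (card (R p))" using pp by linarith
  moreover have "Ncount p = card S" unfolding Ncount_def S_def by simp
  ultimately show ?thesis using Rbound[OF assms] by simp
qed

end
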